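(* Let $(L,[-,-,-],\varepsilon)$ be a ternary Leibniz color algebra and $P:L\to L$ an even linear map such that for all $x,y,z\in\mathcal{H}(L)$, $$[P(x),P(y),P(z)]=P\big([P(x),P(y),z]+[P(x),y,P(z)]+[x,P(y),P(z)]-[P(x),P(y),P(z)]\big).$$ Then $L$ is a ternary Leibniz color algebra with the bracket $\{x,y,z\}=[P(x),P(y),z]+[P(x),y,P(z)]+[x,P(y),P(z)]-[P(x),P(y),P(z)]$.
   Context: $G$ is an abelian group, $\mathbb{K}$ a field of characteristic $\neq 2$, $\mathcal{H}(V)$ the homogeneous elements of a $G$-graded space $V$; even maps preserve degree. A skew-symmetric bicharacter $\varepsilon:G\times G\to\mathbb{K}^*$ satisfies $\varepsilon(a,b)\varepsilon(b,a)=1$, $\varepsilon(a,b+c)=\varepsilon(a,b)\varepsilon(a,c)$, $\varepsilon(a+b,c)=\varepsilon(a,c)\varepsilon(b,c)$; $\varepsilon(x,y)$ means $\varepsilon$ of the degrees. A ternary Leibniz color algebra is a $G$-graded space with such $\varepsilon$ and an even trilinear $[-,-,-]$ satisfying $[[x,y,z],t,u]=[x,y,[z,t,u]]+\varepsilon(z,t+u)[x,[y,t,u],z]+\varepsilon(y+z,t+u)[[x,t,u],y,z]$ for all homogeneous $x,y,z,t,u$. *)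

theory Defs
  imports Main "HOL.Modules"
begin

definition graded_space :: "('k::field \<Rightarrow> 'v::ab_group_add \<Rightarrow> 'v) \<Rightarrow> ('g \<Rightarrow> 'v set) \<Rightarrow> bool" where
  "graded_space scale Vg \<longleftrightarrow> module scale
     \<and> (\<forall>g. module.subspace scale (Vg g))
     \<and> (\<forall>v. \<exists>S f. finite S \<and> (\<forall>g\<in>S. f g \<in> Vg g) \<and> v = sum f S)
     \<and> (\<forall>S f. finite S \<and> (\<forall>g\<in>S. f g \<in> Vg g) \<and> sum f S = 0 \<longrightarrow> (\<forall>g\<in>S. f g = 0))"

definition skew_bicharacter :: "('g::ab_group_add \<Rightarrow> 'g \<Rightarrow> 'k::field) \<Rightarrow> bool" where
  "skew_bicharacter eps \<longleftrightarrow>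
     (\<forall>a b. eps a b \<noteq> 0)
     \<and> (\<forall>a b. eps a b * eps b a = 1)
     \<and> (\<forall>a b c. eps a (b + c) = eps a b * eps a c)
     \<and> (\<forall>a b c. eps (a + b) c = eps a c * eps b c)"

definition linear_map :: "('k \<Rightarrow> 'v::ab_group_add \<Rightarrow> 'v) \<Rightarrow> ('v \<Rightarrow> 'v) \<Rightarrow> bool" where
  "linear_map scale f \<longleftrightarrow> (\<forall>x y. f (x + y) = f x + f y) \<and> (\<forall>c x. f (scale c x) = scale c (f x))"

definition even_map :: "('g \<Rightarrow> 'v set) \<Rightarrow> ('v \<Rightarrow> 'v) \<Rightarrow> bool" where
  "even_map Vg f \<longleftrightarrow> (\<forall>g x. x \<in> Vg g \<longrightarrow> f x \<in> Vg g)"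

definition trilinear :: "('k \<Rightarrow> 'v::ab_group_add \<Rightarrow> 'v) \<Rightarrow> ('v \<Rightarrow> 'v \<Rightarrow> 'v \<Rightarrow> 'v) \<Rightarrow> bool" where
  "trilinear scale br \<longleftrightarrow>
     (\<forall>y z. linear_map scale (\<lambda>x. br x y z))
     \<and> (\<forall>x z. linear_map scale (\<lambda>y. br x y z))
     \<and> (\<forall>x y. linear_map scale (\<lambda>z. br x y z))"

definition even_trimap :: "('g::plus \<Rightarrow> 'v set) \<Rightarrow> ('v \<Rightarrow> 'v \<Rightarrow> 'v \<Rightarrow> 'v) \<Rightarrow> bool" where
  "even_trimap Vg br \<longleftrightarrow>
     (\<forall>a b c x y z. x \<in> Vg a \<longrightarrow> y \<in> Vg b \<longrightarrow> z \<in> Vg c \<longrightarrow> br x y z \<in> Vg (a + b + c))"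

definition ternary_leibniz_color_algebra ::
  "('k::field \<Rightarrow> 'v::ab_group_add \<Rightarrow> 'v) \<Rightarrow> ('g::ab_group_add \<Rightarrow> 'v set) \<Rightarrow> ('g \<Rightarrow> 'g \<Rightarrow> 'k)
    \<Rightarrow> ('v \<Rightarrow> 'v \<Rightarrow> 'v \<Rightarrow> 'v) \<Rightarrow> bool" where
  "ternary_leibniz_color_algebra scale Vg eps br \<longleftrightarrow>
     graded_space scale Vg \<and> skew_bicharacter eps \<and> trilinear scale br \<and> even_trimap Vg br
     \<and> (\<forall>a b c d e x y z t u. x \<in> Vg a \<longrightarrow> y \<in> Vg b \<longrightarrow> z \<in> Vg c \<longrightarrow> t \<in> Vg d \<longrightarrow> u \<in> Vg e \<longrightarrow>
          br (br x y z) t u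
            = br x y (br z t u)
              + scale (eps c (d + e)) (br x (br y t u) z)
              + scale (eps (b + c) (d + e)) (br (br x t u) y z))"

end

theory Submission
  imports Defs
begin

lemma lin_diff: "linear_map scale f \<Longrightarrow> f (x - y) = f x - f y"
proof -
  assume "linear_map scale f"
  then have "f ((x - y) + y) = f (x - y) + f y" unfolding linear_map_def by blast
  then have "f x = f (x - y) + f y" by simp
  then show ?thesis by (simp add: algebra_simps)
qed

theorem mainTheorem13:
  fixes scale :: "'k::field \<Rightarrow> 'v::ab_group_add \<Rightarrow> 'v"
    and Vg :: "'g::ab_group_add \<Rightarrow> 'v set"
    and eps :: "'g \<Rightarrow> 'g \<Rightarrow> 'k"
    and br :: "'v \<Rightarrow> 'v \<Rightarrow> 'v \<Rightarrow> 'v"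
    and P :: "'v \<Rightarrow> 'v"
  assumes char: "(2::'k) \<noteq> 0"
    and L: "ternary_leibniz_color_algebra scale Vg eps br"
    and Plin: "linear_map scale P"
    and Peven: "even_map Vg P"
    and Pid: "\<And>a b c x y z. x \<in> Vg a \<Longrightarrow> y \<in> Vg b \<Longrightarrow> z \<in> Vg c \<Longrightarrow>
      br (P x) (P y) (P z)
        = P (br (P x) (P y) z + br (P x) y (P z) + br x (P y) (P z) - br (P x) (P y) (P z))"
  shows "ternary_leibniz_color_algebra scale Vg eps
           (\<lambda>x y z. br (P x) (P y) z + br (P x) y (P z) + br x (P y) (P z) - br (P x) (P y) (P z))"
proof -
  have GS: "graded_space scale Vg" and SK: "skew_bicharacter eps"
    and TR: "trilinear scale br" and ET: "even_trimap Vg br"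
    and LB: "\<And>a b c d e x y z t u. x \<in> Vg a \<Longrightarrow> y \<in> Vg b \<Longrightarrow> z \<in> Vg c \<Longrightarrow> t \<in> Vg d \<Longrightarrow> u \<in> Vg e \<Longrightarrow>
          br (br x y z) t u
            = br x y (br z t u)
              + scale (eps c (d + e)) (br x (br y t u) z)
              + scale (eps (b + c) (d + e)) (br (br x t u) y z)"
    using L unfolding ternary_leibniz_color_algebra_def by blast+
  have M: "module scale" and SS: "\<And>g. module.subspace scale (Vg g)"
    using GS unfolding graded_space_def by blast+
  have l1: "\<And>y z. linear_map scale (\<lambda>x. br x y z)"
    and l2: "\<And>x z. linear_map scale (\<lambda>y. br x y z)"
    and l3: "\<And>x y. linear_map scale (\<lambda>z. br x y z)"
    using TR unfolding trilinear_def by blast+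
  have b1a: "\<And>x x' y z. br (x + x') y z = br x y z + br x' y z"
    and b1s: "\<And>c x y z. br (scale c x) y z = scale c (br x y z)"
    using l1 unfolding linear_map_def by blast+
  have b2a: "\<And>x y y' z. br x (y + y') z = br x y z + br x y' z"
    and b2s: "\<And>c x y z. br x (scale c y) z = scale c (br x y z)"
    using l2 unfolding linear_map_def by blast+
  have b3a: "\<And>x y z z'. br x y (z + z') = br x y z + br x y z'"
    and b3s: "\<And>c x y z. br x y (scale c z) = scale c (br x y z)"
    using l3 unfolding linear_map_def by blast+
  have b1d: "\<And>x x' y z. br (x - x') y z = br x y z - br x' y z"
    using lin_diff[OF l1] by blast
  have b2d: "\<And>x y y' z. br x (y - y') z = br x y z - br x y' z"
    using lin_diff[OF l2] by blast
  have b3d: "\<And>x y z z'. br x y (z - z') = br x y z - br x y z'"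
    using lin_diff[OF l3] by blast
  have Pa: "\<And>x y. P (x + y) = P x + P y" and Ps: "\<And>c x. P (scale c x) = scale c (P x)"
    using Plin unfolding linear_map_def by blast+
  have Pd: "\<And>x y. P (x - y) = P x - P y" using lin_diff[OF Plin] by blast
  have PV: "\<And>g x. x \<in> Vg g \<Longrightarrow> P x \<in> Vg g" using Peven unfolding even_map_def by blast
  have BV: "\<And>a b c x y z. x \<in> Vg a \<Longrightarrow> y \<in> Vg b \<Longrightarrow> z \<in> Vg c \<Longrightarrow> br x y z \<in> Vg (a + b + c)"
    using ET unfolding even_trimap_def by blast
  have sa: "\<And>c u v. scale c (u + v) = scale c u + scale c v"
    using M by (rule module.scale_right_distrib)
  have sd: "\<And>c u v. scale c (u - v) = scale c u - scale c v"
    using M by (rule module.scale_right_diff_distrib)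
  define nb where "nb = (\<lambda>x y z. br (P x) (P y) z + br (P x) y (P z) + br x (P y) (P z) - br (P x) (P y) (P z))"
  have nbV: "\<And>a b c x y z. x \<in> Vg a \<Longrightarrow> y \<in> Vg b \<Longrightarrow> z \<in> Vg c \<Longrightarrow> nb x y z \<in> Vg (a + b + c)"
    unfolding nb_def
    by (intro module.subspace_diff[OF M SS] module.subspace_add[OF M SS] BV PV)
  have nbP: "\<And>a b c x y z. x \<in> Vg a \<Longrightarrow> y \<in> Vg b \<Longrightarrow> z \<in> Vg c \<Longrightarrow> P (nb x y z) = br (P x) (P y) (P z)"
    unfolding nb_def using Pid by metis
  have trin: "trilinear scale nb"
    unfolding trilinear_def linear_map_def nb_def
    by (simp add: b1a b1s b2a b2s b3a b3s Pa Ps sa sd algebra_simps)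
  have etn: "even_trimap Vg nb" unfolding even_trimap_def using nbV by blast
  have leib: "nb (nb x y z) t u
            = nb x y (nb z t u)
              + scale (eps c (d + e)) (nb x (nb y t u) z)
              + scale (eps (b + c) (d + e)) (nb (nb x t u) y z)"
    if x: "x \<in> Vg a" and y: "y \<in> Vg b" and z: "z \<in> Vg c" and t: "t \<in> Vg d" and u: "u \<in> Vg e"
    for a b c d e x y z t u
  proof -
    have X: "P x \<in> Vg a" and Y: "P y \<in> Vg b" and Z: "P z \<in> Vg c" and T: "P t \<in> Vg d" and U: "P u \<in> Vg e"
      using PV x y z t u by blast+
    note e1 = nbP[OF x y z, unfolded nb_def] nbP[OF z t u, unfolded nb_def]
      nbP[OF y t u, unfolded nb_def] nbP[OF x t u, unfolded nb_def]
    note L1 = LB[OF X Y Z T u] LB[OF X Y Z t U] LB[OF X Y z T U] LB[OF X y Z T U]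
      LB[OF x Y Z T U] LB[OF X Y Z T U]
    show ?thesis
      apply (simp only: nb_def e1)
      apply (simp only: b1a b1d b2a b2d b3a b3d)
      apply (simp only: L1)
      apply (simp only: sa sd)
      apply (simp add: algebra_simps)
      done
  qed
  show ?thesis
    unfolding nb_def[symmetric] ternary_leibniz_color_algebra_def
    using GS SK trin etn leib by blast
qed

end
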